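(* Let $X,Y\colon\mathcal H\leftarrow\mathcal G$ be groupoid correspondences. Any $\mathcal H,\mathcal G$-equivariant continuous map $\alpha\colon X\to Y$ is a local homeomorphism. Consequently, an injective such map is a homeomorphism from $X$ onto an open subset of $Y$, and it is a homeomorphism onto $Y$ if it is also surjective.
   Context: Groupoids are étale ($r,s$ local homeomorphisms, continuous multiplication and inversion) with Hausdorff locally compact object space. A groupoid correspondence $X\colon\mathcal H\leftarrow\mathcal G$ is a space with commuting continuous left $\mathcal H$-action (anchor $r\colon X\to\mathcal H^0$) and right $\mathcal G$-action (anchor $s\colon X\to\mathcal G^0$), such that $s$ is a local homeomorphism and the right action is free and proper. A map $\alpha$ is $\mathcal H,\mathcal G$-equivariant if it preserves both anchor maps and satisfies $\alpha(hxg)=h\alpha(x)g$. *)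

theory Defs
  imports "HOL-Analysis.Analysis"
begin

definition local_homeomorphism_map :: "'a topology \<Rightarrow> 'b topology \<Rightarrow> ('a \<Rightarrow> 'b) \<Rightarrow> bool" where
  "local_homeomorphism_map X Y f \<longleftrightarrow>
     continuous_map X Y f \<and>
     (\<forall>x\<in>topspace X. \<exists>U. openin X U \<and> x \<in> U \<and> openin Y (f ` U) \<and>
          homeomorphic_map (subtopology X U) (subtopology Y (f ` U)) f)"

record ('o, 'a) groupoid =
  obj_top :: "'o topology"
  arr_top :: "'a topology"
  rng  :: "'a \<Rightarrow> 'o"
  src  :: "'a \<Rightarrow> 'o"
  mult :: "'a \<Rightarrow> 'a \<Rightarrow> 'a"
  ginv :: "'a \<Rightarrow> 'a"
  gunit :: "'o \<Rightarrow> 'a"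

abbreviation objs :: "('o, 'a, 'z) groupoid_scheme \<Rightarrow> 'o set" where
  "objs G \<equiv> topspace (obj_top G)"

abbreviation arrs :: "('o, 'a, 'z) groupoid_scheme \<Rightarrow> 'a set" where
  "arrs G \<equiv> topspace (arr_top G)"

definition composable_pairs :: "('o, 'a, 'z) groupoid_scheme \<Rightarrow> ('a \<times> 'a) set" where
  "composable_pairs G = {(g, h). g \<in> arrs G \<and> h \<in> arrs G \<and> src G g = rng G h}"

definition groupoid_axioms :: "('o, 'a, 'z) groupoid_scheme \<Rightarrow> bool" where
  "groupoid_axioms G \<longleftrightarrow>
     (\<forall>g\<in>arrs G. rng G g \<in> objs G \<and> src G g \<in> objs G) \<and>
     (\<forall>x\<in>objs G. gunit G x \<in> arrs G \<and> rng G (gunit G x) = x \<and> src G (gunit G x) = x) \<and>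
     (\<forall>g\<in>arrs G. \<forall>h\<in>arrs G. src G g = rng G h \<longrightarrow>
        mult G g h \<in> arrs G \<and> rng G (mult G g h) = rng G g \<and> src G (mult G g h) = src G h) \<and>
     (\<forall>g\<in>arrs G. \<forall>h\<in>arrs G. \<forall>k\<in>arrs G. src G g = rng G h \<longrightarrow> src G h = rng G k \<longrightarrow>
        mult G (mult G g h) k = mult G g (mult G h k)) \<and>
     (\<forall>g\<in>arrs G. mult G (gunit G (rng G g)) g = g \<and> mult G g (gunit G (src G g)) = g) \<and>
     (\<forall>g\<in>arrs G. ginv G g \<in> arrs G \<and> rng G (ginv G g) = src G g \<and> src G (ginv G g) = rng G g \<and>
        mult G g (ginv G g) = gunit G (rng G g) \<and> mult G (ginv G g) g = gunit G (src G g))"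

definition etale_groupoid :: "('o, 'a, 'z) groupoid_scheme \<Rightarrow> bool" where
  "etale_groupoid G \<longleftrightarrow>
     groupoid_axioms G \<and>
     continuous_map (arr_top G) (obj_top G) (rng G) \<and>
     continuous_map (arr_top G) (obj_top G) (src G) \<and>
     continuous_map (obj_top G) (arr_top G) (gunit G) \<and>
     continuous_map (arr_top G) (arr_top G) (ginv G) \<and>
     continuous_map (subtopology (prod_topology (arr_top G) (arr_top G)) (composable_pairs G))
        (arr_top G) (\<lambda>(g, h). mult G g h) \<and>
     local_homeomorphism_map (arr_top G) (obj_top G) (rng G) \<and>
     local_homeomorphism_map (arr_top G) (obj_top G) (src G) \<and>
     Hausdorff_space (obj_top G) \<and> locally_compact_space (obj_top G)"

record ('x, 'ho, 'ha, 'go, 'ga) corr =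
  ctop :: "'x topology"
  lanchor :: "'x \<Rightarrow> 'ho"
  ranchor :: "'x \<Rightarrow> 'go"
  lact :: "'ha \<Rightarrow> 'x \<Rightarrow> 'x"
  ract :: "'x \<Rightarrow> 'ga \<Rightarrow> 'x"

definition lact_dom ::
  "('ho, 'ha, 'z1) groupoid_scheme \<Rightarrow> ('x, 'ho, 'ha, 'go, 'ga, 'z) corr_scheme \<Rightarrow> ('ha \<times> 'x) set" where
  "lact_dom H X = {(h, x). h \<in> arrs H \<and> x \<in> topspace (ctop X) \<and> src H h = lanchor X x}"

definition ract_dom ::
  "('go, 'ga, 'z2) groupoid_scheme \<Rightarrow> ('x, 'ho, 'ha, 'go, 'ga, 'z) corr_scheme \<Rightarrow> ('x \<times> 'ga) set" where
  "ract_dom G X = {(x, g). x \<in> topspace (ctop X) \<and> g \<in> arrs G \<and> ranchor X x = rng G g}"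

definition groupoid_correspondence ::
  "('ho, 'ha, 'z1) groupoid_scheme \<Rightarrow> ('go, 'ga, 'z2) groupoid_scheme \<Rightarrow>
   ('x, 'ho, 'ha, 'go, 'ga, 'z) corr_scheme \<Rightarrow> bool" where
  "groupoid_correspondence H G X \<longleftrightarrow>
     etale_groupoid H \<and> etale_groupoid G \<and>
     \<comment> \<open>anchor maps\<close>
     continuous_map (ctop X) (obj_top H) (lanchor X) \<and>
     continuous_map (ctop X) (obj_top G) (ranchor X) \<and>
     \<comment> \<open>left H-action\<close>
     (\<forall>(h, x)\<in>lact_dom H X. lact X h x \<in> topspace (ctop X) \<and>
        lanchor X (lact X h x) = rng H h \<and> ranchor X (lact X h x) = ranchor X x) \<and>
     (\<forall>x\<in>topspace (ctop X). lact X (gunit H (lanchor X x)) x = x) \<and>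
     (\<forall>h1\<in>arrs H. \<forall>h2\<in>arrs H. \<forall>x\<in>topspace (ctop X).
        src H h1 = rng H h2 \<longrightarrow> src H h2 = lanchor X x \<longrightarrow>
        lact X h1 (lact X h2 x) = lact X (mult H h1 h2) x) \<and>
     continuous_map (subtopology (prod_topology (arr_top H) (ctop X)) (lact_dom H X))
        (ctop X) (\<lambda>(h, x). lact X h x) \<and>
     \<comment> \<open>right G-action\<close>
     (\<forall>(x, g)\<in>ract_dom G X. ract X x g \<in> topspace (ctop X) \<and>
        ranchor X (ract X x g) = src G g \<and> lanchor X (ract X x g) = lanchor X x) \<and>
     (\<forall>x\<in>topspace (ctop X). ract X x (gunit G (ranchor X x)) = x) \<and>
     (\<forall>x\<in>topspace (ctop X). \<forall>g1\<in>arrs G. \<forall>g2\<in>arrs G.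
        ranchor X x = rng G g1 \<longrightarrow> src G g1 = rng G g2 \<longrightarrow>
        ract X (ract X x g1) g2 = ract X x (mult G g1 g2)) \<and>
     continuous_map (subtopology (prod_topology (ctop X) (arr_top G)) (ract_dom G X))
        (ctop X) (\<lambda>(x, g). ract X x g) \<and>
     \<comment> \<open>the actions commute\<close>
     (\<forall>h\<in>arrs H. \<forall>x\<in>topspace (ctop X). \<forall>g\<in>arrs G.
        src H h = lanchor X x \<longrightarrow> ranchor X x = rng G g \<longrightarrow>
        ract X (lact X h x) g = lact X h (ract X x g)) \<and>
     \<comment> \<open>s is a local homeomorphism\<close>
     local_homeomorphism_map (ctop X) (obj_top G) (ranchor X) \<and>
     \<comment> \<open>right action free\<close>
     (\<forall>(x, g)\<in>ract_dom G X. ract X x g = x \<longrightarrow> g = gunit G (ranchor X x)) \<and>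
     \<comment> \<open>right action proper\<close>
     proper_map (subtopology (prod_topology (ctop X) (arr_top G)) (ract_dom G X))
        (prod_topology (ctop X) (ctop X)) (\<lambda>(x, g). (x, ract X x g))"

definition equivariant_map ::
  "('ho, 'ha, 'z1) groupoid_scheme \<Rightarrow> ('go, 'ga, 'z2) groupoid_scheme \<Rightarrow>
   ('x, 'ho, 'ha, 'go, 'ga, 'z) corr_scheme \<Rightarrow> ('y, 'ho, 'ha, 'go, 'ga, 'w) corr_scheme \<Rightarrow>
   ('x \<Rightarrow> 'y) \<Rightarrow> bool" where
  "equivariant_map H G X Y f \<longleftrightarrow>
     (\<forall>x\<in>topspace (ctop X). f x \<in> topspace (ctop Y)) \<and>
     (\<forall>x\<in>topspace (ctop X). lanchor Y (f x) = lanchor X x \<and> ranchor Y (f x) = ranchor X x) \<and>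
     (\<forall>h\<in>arrs H. \<forall>x\<in>topspace (ctop X). \<forall>g\<in>arrs G.
        src H h = lanchor X x \<longrightarrow> ranchor X x = rng G g \<longrightarrow>
        f (ract X (lact X h x) g) = ract Y (lact Y h (f x)) g)"

end

theory Submission
  imports Defs
begin

lemma openin_sub: "openin X S \<Longrightarrow> S \<subseteq> U \<Longrightarrow> openin (subtopology X U) S"
  unfolding openin_subtopology by (rule exI[of _ S]) auto

lemma cm_in: "continuous_map X Y f \<Longrightarrow> x \<in> topspace X \<Longrightarrow> f x \<in> topspace Y"
  by (auto simp: continuous_map_def)

lemma lh_open_sub:
  assumes "openin X U" "openin Y (f ` U)"
    "homeomorphic_map (subtopology X U) (subtopology Y (f ` U)) f"
    "openin X S" "S \<subseteq> U"
  shows "openin Y (f ` S)"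
proof -
  have "openin (subtopology X U) S"
    using assms(4,5) by (rule openin_sub)
  then have "openin (subtopology Y (f ` U)) (f ` S)"
    using homeomorphic_imp_open_map[OF assms(3)] by (simp add: open_map_def)
  then show ?thesis using assms(2) openin_trans_full by blast
qed

lemma lh_open_map:
  assumes "local_homeomorphism_map X Y f"
  shows "open_map X Y f"
  unfolding open_map_def
proof (intro allI impI)
  fix S assume S: "openin X S"
  show "openin Y (f ` S)"
  proof (subst openin_subopen, intro ballI)
    fix y assume "y \<in> f ` S"
    then obtain x where x: "x \<in> S" "y = f x" by auto
    then have "x \<in> topspace X" using S openin_subset by blast
    then obtain U where U: "openin X U" "x \<in> U" "openin Y (f ` U)"
      "homeomorphic_map (subtopology X U) (subtopology Y (f ` U)) f"
      using assms unfolding local_homeomorphism_map_def by blast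
    have "openin Y (f ` (S \<inter> U))"
      by (rule lh_open_sub[OF U(1,3,4)]) (use S U in auto)
    then show "\<exists>T. openin Y T \<and> y \<in> T \<and> T \<subseteq> f ` S" using x U by blast
  qed
qed

lemma lh_factor:
  assumes f: "continuous_map X Y f"
    and p: "local_homeomorphism_map X Z p"
    and q: "local_homeomorphism_map Y Z q"
    and comm: "\<forall>x\<in>topspace X. q (f x) = p x"
  shows "local_homeomorphism_map X Y f"
  unfolding local_homeomorphism_map_def
proof (intro conjI f ballI)
  fix x assume x: "x \<in> topspace X"
  obtain U where U: "openin X U" "x \<in> U" "openin Z (p ` U)"
      "homeomorphic_map (subtopology X U) (subtopology Z (p ` U)) p"
    using p x unfolding local_homeomorphism_map_def by blast
  have fx: "f x \<in> topspace Y" using f x by (rule cm_in)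
  obtain V where V: "openin Y V" "f x \<in> V" "openin Z (q ` V)"
      "homeomorphic_map (subtopology Y V) (subtopology Z (q ` V)) q"
    using q fx unfolding local_homeomorphism_map_def by blast
  have injq: "inj_on q (topspace Y \<inter> V)"
    using homeomorphic_imp_injective_map[OF V(4)] by simp
  have VY: "V \<subseteq> topspace Y" using V(1) openin_subset by blast
  have UX: "U \<subseteq> topspace X" using U(1) openin_subset by blast
  define W where "W = {y \<in> U. f y \<in> V}"
  have W: "openin X W" unfolding W_def
    by (rule openin_continuous_map_preimage_gen[OF f U(1) V(1)])
  have xW: "x \<in> W" using U V unfolding W_def by auto
  have WX: "W \<subseteq> topspace X" using UX W_def by auto
  have img: "f ` S = {y \<in> V. q y \<in> p ` S}" if "S \<subseteq> W" for S
  proof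
    show "f ` S \<subseteq> {y \<in> V. q y \<in> p ` S}"
    proof (rule image_subsetI)
      fix s assume s: "s \<in> S"
      then have sW: "s \<in> W" using that by blast
      then have "f s \<in> V" "s \<in> topspace X" using WX unfolding W_def by auto
      then have "q (f s) = p s" using comm by blast
      then have "q (f s) \<in> p ` S" using s by simp
      then show "f s \<in> {y \<in> V. q y \<in> p ` S}" using \<open>f s \<in> V\<close> by simp
    qed
  next
    show "{y \<in> V. q y \<in> p ` S} \<subseteq> f ` S"
    proof
      fix y assume y: "y \<in> {y \<in> V. q y \<in> p ` S}"
      then obtain s where s: "s \<in> S" "q y = p s" by auto
      have "f s \<in> V" "s \<in> topspace X" using s that WX W_def by auto
      then have "q (f s) = q y" using comm s by auto
      moreover have "f s \<in> topspace Y" using f \<open>s \<in> topspace X\<close> by (rule cm_in)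
      ultimately have "f s = y"
        by (intro inj_onD[OF injq \<open>q (f s) = q y\<close>]) (use y VY \<open>f s \<in> V\<close> in auto)
      then show "y \<in> f ` S" using s by auto
    qed
  qed
  have openimg: "openin Y (f ` S)" if "openin X S" "S \<subseteq> W" for S
  proof -
    have "openin Z (p ` S)"
      by (rule lh_open_sub[OF U(1,3,4) that(1)]) (use that W_def in auto)
    then have "openin Y {y \<in> topspace Y. q y \<in> p ` S}"
      using q unfolding local_homeomorphism_map_def
      by (intro openin_continuous_map_preimage[of Y Z q]) auto
    then have "openin Y (V \<inter> {y \<in> topspace Y. q y \<in> p ` S})"
      using V(1) by blast
    moreover have "V \<inter> {y \<in> topspace Y. q y \<in> p ` S} = {y \<in> V. q y \<in> p ` S}"
      using VY by auto
    ultimately show ?thesis using img[OF that(2)] by simp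
  qed
  have injf: "inj_on f W"
  proof (rule inj_onI)
    fix a b assume "a \<in> W" "b \<in> W" "f a = f b"
    moreover have "a \<in> topspace X" "b \<in> topspace X" using \<open>a \<in> W\<close> \<open>b \<in> W\<close> WX by auto
    ultimately have "p a = p b" using comm by metis
    moreover have "inj_on p (topspace X \<inter> U)"
      using homeomorphic_imp_injective_map[OF U(4)] by simp
    ultimately show "a = b"
      by (intro inj_onD[of p _ a b]) (use \<open>a \<in> W\<close> \<open>b \<in> W\<close> WX W_def in auto)
  qed
  have fW: "f ` W \<subseteq> topspace Y" using cm_in[OF f] WX by auto
  have hom: "homeomorphic_map (subtopology X W) (subtopology Y (f ` W)) f"
  proof (rule bijective_open_imp_homeomorphic_map)
    show "continuous_map (subtopology X W) (subtopology Y (f ` W)) f"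
      by (rule continuous_map_into_subtopology) (auto intro: continuous_map_from_subtopology[OF f])
    show "open_map (subtopology X W) (subtopology Y (f ` W)) f"
      unfolding open_map_def
    proof (intro allI impI)
      fix S assume "openin (subtopology X W) S"
      then have S: "openin X S" "S \<subseteq> W"
        using W openin_trans_full openin_imp_subset by blast+
      have "openin Y (f ` S)" using openimg[OF S] .
      then show "openin (subtopology Y (f ` W)) (f ` S)"
        using S(2) by (intro openin_sub) auto
    qed
    show "f ` topspace (subtopology X W) = topspace (subtopology Y (f ` W))"
      using WX fW by (auto simp: Int_absorb1 inf.absorb2)
    show "inj_on f (topspace (subtopology X W))"
      using injf by (simp add: inj_on_subset)
  qed
  show "\<exists>U. openin X U \<and> x \<in> U \<and> openin Y (f ` U) \<and>
          homeomorphic_map (subtopology X U) (subtopology Y (f ` U)) f"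
    using W xW openimg[OF W order_refl] hom by blast
qed

theorem lemma6p1:
  fixes H :: "('ho, 'ha) groupoid" and G :: "('go, 'ga) groupoid"
    and X :: "('x, 'ho, 'ha, 'go, 'ga) corr" and Y :: "('y, 'ho, 'ha, 'go, 'ga) corr"
    and \<alpha> :: "'x \<Rightarrow> 'y"
  assumes "groupoid_correspondence H G X"
    and "groupoid_correspondence H G Y"
    and "equivariant_map H G X Y \<alpha>"
    and "continuous_map (ctop X) (ctop Y) \<alpha>"
  shows "local_homeomorphism_map (ctop X) (ctop Y) \<alpha>
    \<and> (inj_on \<alpha> (topspace (ctop X)) \<longrightarrow>
         openin (ctop Y) (\<alpha> ` topspace (ctop X)) \<and>
         homeomorphic_map (ctop X) (subtopology (ctop Y) (\<alpha> ` topspace (ctop X))) \<alpha>)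
    \<and> (inj_on \<alpha> (topspace (ctop X)) \<and> \<alpha> ` topspace (ctop X) = topspace (ctop Y) \<longrightarrow>
         homeomorphic_map (ctop X) (ctop Y) \<alpha>)"
proof -
  have LH: "local_homeomorphism_map (ctop X) (ctop Y) \<alpha>"
  proof (rule lh_factor[OF assms(4)])
    show "local_homeomorphism_map (ctop X) (obj_top G) (ranchor X)"
      using assms(1) unfolding groupoid_correspondence_def by blast
    show "local_homeomorphism_map (ctop Y) (obj_top G) (ranchor Y)"
      using assms(2) unfolding groupoid_correspondence_def by blast
    show "\<forall>x\<in>topspace (ctop X). ranchor Y (\<alpha> x) = ranchor X x"
      using assms(3) unfolding equivariant_map_def by blast
  qed
  have OM: "open_map (ctop X) (ctop Y) \<alpha>" by (rule lh_open_map[OF LH])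
  have img: "\<alpha> ` topspace (ctop X) \<subseteq> topspace (ctop Y)"
    using assms(4) continuous_map_image_subset_topspace by blast
  have openim: "openin (ctop Y) (\<alpha> ` topspace (ctop X))"
    using OM by (simp add: open_map_def)
  have H1: "homeomorphic_map (ctop X) (subtopology (ctop Y) (\<alpha> ` topspace (ctop X))) \<alpha>"
    if inj: "inj_on \<alpha> (topspace (ctop X))"
  proof (rule bijective_open_imp_homeomorphic_map[OF _ _ _ inj])
    show "continuous_map (ctop X) (subtopology (ctop Y) (\<alpha> ` topspace (ctop X))) \<alpha>"
      by (rule continuous_map_into_subtopology[OF assms(4)]) auto
    show "open_map (ctop X) (subtopology (ctop Y) (\<alpha> ` topspace (ctop X))) \<alpha>"
      using OM unfolding open_map_def
      by (metis image_mono openin_sub openin_subset)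
    show "\<alpha> ` topspace (ctop X) = topspace (subtopology (ctop Y) (\<alpha> ` topspace (ctop X)))"
      using img by auto
  qed
  have H2: "inj_on \<alpha> (topspace (ctop X)) \<and> \<alpha> ` topspace (ctop X) = topspace (ctop Y) \<longrightarrow>
         homeomorphic_map (ctop X) (ctop Y) \<alpha>"
  proof
    assume A: "inj_on \<alpha> (topspace (ctop X)) \<and> \<alpha> ` topspace (ctop X) = topspace (ctop Y)"
    then have "homeomorphic_map (ctop X) (subtopology (ctop Y) (topspace (ctop Y))) \<alpha>"
      using H1 by simp
    then show "homeomorphic_map (ctop X) (ctop Y) \<alpha>" by simp
  qed
  show ?thesis using LH openim H1 H2 by blast
qed

end
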